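(* Let $p>3$ be prime, $t\in\{1,3,p,3p\}$, and $1\le r\le 3p-1$ with $\gcd(r,3p)=1$. Then \[\Lambda(3,r,t)=\begin{cases}\Delta(|r|_p) & \text{if } r\equiv1\pmod 3\text{ and } t\in\{3,3p\},\\ \Delta\!\left(\frac{|r|_p}{\gcd(3,|r|_p)}\right) & \text{if } r\equiv 1\pmod 3\text{ and } t\in\{1,p\},\\ \Delta\!\left(\frac{|r|_p}{\gcd(2,|r|_p)}\right) & \text{if } r\equiv 2\pmod 3.\end{cases}\]
   Context: $|r|_m$ is the multiplicative order of $r$ modulo $m$ (with $|r|_1=1$). $S_k(x):=1+x+\cdots+x^{k-1}$, $S_0:=0$. For $m\ge1$ with $\gcd(r,m)=1$, $\kappa(m,r,t):=\dfrac{m|r|_m}{\gcd(m,\,tS_{|r|_m}(r))}$. For $d\in\{1,3,p,3p\}$, $\Lambda(d,r,t):=\{\ell>0:\ \ell \text{ divides } \frac{|r|_{3p}}{\gcd(\kappa(d,r,t),|r|_{3p})}\text{ and }\gcd(r^{\ell\kappa(d,r,t)}-1,3p)=d\}$. For a positive integer $m$, $\Delta(m):=\{\ell: 0<\ell<m,\ \ell\mid m\}$. *)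

theory Defs
  imports "HOL-Number_Theory.Number_Theory"
begin

definition S :: "nat \<Rightarrow> nat \<Rightarrow> nat" where
  "S k x = (\<Sum>i<k. x ^ i)"

text \<open>kappa(m,r,t) = m |r|_m / gcd(m, t S_{|r|_m}(r)), with |r|_m = ord m r (library).\<close>
definition kappa :: "nat \<Rightarrow> nat \<Rightarrow> nat \<Rightarrow> nat" where
  "kappa m r t = (m * ord m r) div gcd m (t * S (ord m r) r)"

definition Lambda :: "nat \<Rightarrow> nat \<Rightarrow> nat \<Rightarrow> nat \<Rightarrow> nat set" where
  "Lambda p d r t = {l. l > 0 \<and>
     l dvd (ord (3*p) r div gcd (kappa d r t) (ord (3*p) r)) \<and>
     gcd (r ^ (l * kappa d r t) - 1) (3*p) = d}"

definition Delta :: "nat \<Rightarrow> nat set" where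
  "Delta m = {l. 0 < l \<and> l < m \<and> l dvd m}"

end

theory Submission
  imports Defs
begin

lemma c3p: "prime (p::nat) \<Longrightarrow> p > 3 \<Longrightarrow> coprime 3 p"
proof -
  assume "prime p" "p > 3"
  have "prime (3::nat)" by simp
  moreover have "(3::nat) \<noteq> p" using \<open>p > 3\<close> by simp
  ultimately show ?thesis using primes_coprime[of 3 p] \<open>prime p\<close> by simp
qed

lemma gcd3_iff:
  fixes p r k :: nat
  assumes "prime p" "p > 3" "r \<ge> 1"
  shows "gcd (r ^ k - 1) (3*p) = 3 \<longleftrightarrow> ord 3 r dvd k \<and> \<not> ord p r dvd k"
proof -
  have rk: "r ^ k \<ge> 1" using assms(3) by simp
  have e3: "3 dvd (r^k - 1) \<longleftrightarrow> ord 3 r dvd k"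
    using cong_altdef_nat[OF rk, of 3] ord_divides[of r k 3] by simp
  have ep: "p dvd (r^k - 1) \<longleftrightarrow> ord p r dvd k"
    using cong_altdef_nat[OF rk, of p] ord_divides[of r k p] by simp
  let ?x = "r^k - 1"
  have c: "coprime 3 p" using c3p[OF assms(1,2)] .
  have "gcd ?x (3*p) = 3 \<longleftrightarrow> 3 dvd ?x \<and> \<not> p dvd ?x"
  proof
    assume h: "gcd ?x (3*p) = 3"
    then have "3 dvd ?x" using gcd_dvd1[of ?x "3*p"] by simp
    moreover have "\<not> p dvd ?x"
    proof
      assume "p dvd ?x"
      then have "3*p dvd ?x" using \<open>3 dvd ?x\<close> c by (simp add: divides_mult)
      then have "gcd ?x (3*p) = 3*p" by (simp add: gcd_nat.absorb2)
      then show False using h assms(2) by simp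
    qed
    ultimately show "3 dvd ?x \<and> \<not> p dvd ?x" by blast
  next
    assume h: "3 dvd ?x \<and> \<not> p dvd ?x"
    define g where "g = gcd ?x (3*p)"
    have "3 dvd g" using h unfolding g_def by simp
    then obtain hh where hh: "g = 3 * hh" by blast
    have "g dvd 3*p" unfolding g_def by simp
    then have "hh dvd p" using hh by simp
    then have "hh = 1 \<or> hh = p" using assms(1) by (simp add: prime_nat_iff)
    moreover have "g dvd ?x" unfolding g_def by simp
    ultimately have "hh = 1"
    proof (elim disjE)
      assume "hh = p" "g dvd ?x"
      then have "p dvd ?x" using hh dvd_trans[of p g ?x] by simp
      then show ?thesis using h by simp
    qed
    then show "gcd ?x (3*p) = 3" using hh g_def by simp
  qed
  then show ?thesis using e3 ep by simp
qed

lemma caseA: "0 < (n::nat) \<Longrightarrow> {l. 0 < l \<and> l dvd n \<and> \<not> n dvd l} = Delta n"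
  unfolding Delta_def by (auto dest: dvd_imp_le simp: dvd_antisym)

lemma caseB: "0 < (n::nat) \<Longrightarrow> {l. 0 < l \<and> l dvd (n div gcd 3 n) \<and> \<not> n dvd l * 3} = Delta (n div gcd 3 n)"
proof (cases "3 dvd n")
  case True
  then obtain m where m: "n = 3 * m" by blast
  assume "0 < n"
  then have "0 < m" using m by simp
  have "gcd 3 n = 3" using m by simp
  then have "n div gcd 3 n = m" using m by simp
  moreover have "n dvd l * 3 \<longleftrightarrow> m dvd l" for l using m by (simp add: mult.commute)
  ultimately show ?thesis using caseA[OF \<open>0 < m\<close>] by simp
next
  case False
  assume "0 < n"
  have "coprime 3 n" using False by (simp add: prime_imp_coprime_nat)
  then have "gcd 3 n = 1" by simp
  moreover have "n dvd l * 3 \<longleftrightarrow> n dvd l" for l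
    using \<open>coprime 3 n\<close> by (simp add: coprime_commute coprime_dvd_mult_left_iff)
  ultimately show ?thesis using caseA[OF \<open>0 < n\<close>] by simp
qed

lemma caseC: "0 < (n::nat) \<Longrightarrow> {l. 0 < l \<and> l dvd (lcm 2 n div gcd 2 (lcm 2 n)) \<and> \<not> n dvd l * 2} = Delta (n div gcd 2 n)"
proof (cases "2 dvd n")
  case True
  then obtain m where m: "n = 2 * m" by blast
  assume "0 < n"
  then have "0 < m" using m by simp
  have "lcm 2 n = n" using True by (simp add: lcm_proj2_if_dvd)
  moreover have "gcd 2 n = 2" using m by simp
  moreover have "n div 2 = m" using m by simp
  moreover have "n dvd l * 2 \<longleftrightarrow> m dvd l" for l using m by (simp add: mult.commute)
  ultimately show ?thesis using caseA[OF \<open>0 < m\<close>] by simp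
next
  case False
  assume "0 < n"
  have "coprime 2 n" using False by (simp add: prime_imp_coprime_nat)
  then have "gcd 2 n = 1" by simp
  moreover have "lcm 2 n = 2 * n" using \<open>coprime 2 n\<close> by (simp add: lcm_coprime)
  moreover have "n dvd l * 2 \<longleftrightarrow> n dvd l" for l
    using \<open>coprime 2 n\<close> by (simp add: coprime_commute coprime_dvd_mult_left_iff)
  ultimately show ?thesis using caseA[OF \<open>0 < n\<close>] by simp
qed


lemma S1: "S 1 r = 1" by (simp add: S_def)
lemma S2: "S 2 r = 1 + r" by (simp add: S_def numeral_2_eq_2)

theorem lemma5p3:
  fixes p r t :: nat
  assumes "prime p" and "p > 3"
    and "t \<in> {1, 3, p, 3*p}"
    and "1 \<le> r" and "r \<le> 3*p - 1" and "coprime r (3*p)"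
  shows "Lambda p 3 r t =
    (if r mod 3 = 1 \<and> t \<in> {3, 3*p} then Delta (ord p r)
     else if r mod 3 = 1 \<and> t \<in> {1, p} then Delta (ord p r div gcd 3 (ord p r))
     else Delta (ord p r div gcd 2 (ord p r)))"
proof -
  have c: "coprime 3 p" using c3p[OF assms(1,2)] .
  have cp: "coprime p r" using assms(6) by (simp add: coprime_commute)
  have c3: "coprime 3 r" using assms(6) by (simp add: coprime_commute)
  define n where "n = ord p r"
  have n0: "0 < n" unfolding n_def using cp by simp
  have L: "ord (3*p) r = lcm (ord 3 r) n" unfolding n_def using ord_modulus_mult_coprime[OF c] .
  have rm: "r mod 3 = 1 \<or> r mod 3 = 2"
  proof -
    have "\<not> 3 dvd r"
    proof
      assume "3 dvd r"
      then have "(3::nat) dvd gcd 3 r" by simp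
      then show False using c3 by simp
    qed
    then have "r mod 3 \<noteq> 0" by (simp add: dvd_eq_mod_eq_0)
    then show ?thesis by linarith
  qed
  have o3: "ord 3 r = (if r mod 3 = 1 then 1 else 2)"
  proof -
    have e: "ord 3 r = ord 3 (r mod 3)" by (rule ord_mod[symmetric])
    have "ord 3 (2::nat) = 2" by (simp add: ord_eq_2_iff cong_def)
    then show ?thesis using rm e by (auto simp del: ord_mod)
  qed
  have Lam: "Lambda p 3 r t = {l. 0 < l \<and> l dvd (ord (3*p) r div gcd (kappa 3 r t) (ord (3*p) r))
       \<and> ord 3 r dvd l * kappa 3 r t \<and> \<not> n dvd l * kappa 3 r t}"
    unfolding Lambda_def n_def using gcd3_iff[OF assms(1,2,4)] by simp
  have tp: "p \<noteq> 1" "p \<noteq> 3" "3*p \<noteq> 1" "3 * p \<noteq> p" using assms(2) by auto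
  show ?thesis
  proof (cases "r mod 3 = 1")
    case r1: True
    have o31: "ord 3 r = 1" using o3 r1 by simp
    have L1: "ord (3*p) r = n" using L o31 by simp
    show ?thesis
    proof (cases "t \<in> {3, 3*p}")
      case True
      then have "gcd 3 t = 3" by auto
      then have k: "kappa 3 r t = 1" unfolding kappa_def using o31 by (simp add: S_def)
      have "{l. 0 < l \<and> l dvd (ord (3*p) r div gcd (kappa 3 r t) (ord (3*p) r))
       \<and> ord 3 r dvd l * kappa 3 r t \<and> \<not> n dvd l * kappa 3 r t} = {l. 0 < l \<and> l dvd n \<and> \<not> n dvd l}"
        unfolding k L1 o31 by simp
      then have "Lambda p 3 r t = Delta n" using caseA[OF n0] Lam by simp
      then show ?thesis using r1 True n_def by simp
    next
      case False
      then have t1: "t \<in> {1, p}" using assms(3) by auto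
      then have "gcd 3 t = 1" using c by auto
      then have k: "kappa 3 r t = 3" unfolding kappa_def using o31 by (simp add: S_def)
      have g: "gcd 3 n = gcd n 3" by (rule gcd.commute)
      have "{l. 0 < l \<and> l dvd (ord (3*p) r div gcd (kappa 3 r t) (ord (3*p) r))
       \<and> ord 3 r dvd l * kappa 3 r t \<and> \<not> n dvd l * kappa 3 r t} = {l. 0 < l \<and> l dvd (n div gcd 3 n) \<and> \<not> n dvd l * 3}"
        unfolding k L1 o31 g by simp
      then have "Lambda p 3 r t = Delta (n div gcd 3 n)" using caseB[OF n0] Lam by simp
      then show ?thesis using r1 False t1 n_def by simp
    qed
  next
    case r2: False
    have o32: "ord 3 r = 2" using o3 r2 by simp
    have "r mod 3 = 2" using rm r2 by simp
    then have "3 dvd 1 + r" by presburger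
    then have "3 dvd t * (1 + r)" by (rule dvd_mult)
    then have "gcd 3 (t * (1 + r)) = 3" by (simp only: gcd_nat.absorb1)
    then have k: "kappa 3 r t = 2" unfolding kappa_def o32 S2 by simp
    have L2: "ord (3*p) r = lcm 2 n" using L o32 by simp
    have g: "gcd 2 (lcm 2 n) = gcd (lcm 2 n) 2" by (rule gcd.commute)
    have "{l. 0 < l \<and> l dvd (ord (3*p) r div gcd (kappa 3 r t) (ord (3*p) r))
       \<and> ord 3 r dvd l * kappa 3 r t \<and> \<not> n dvd l * kappa 3 r t} = {l. 0 < l \<and> l dvd (lcm 2 n div gcd 2 (lcm 2 n)) \<and> \<not> n dvd l * 2}"
      unfolding k L2 o32 g by simp
    then have "Lambda p 3 r t = Delta (n div gcd 2 n)" using caseC[OF n0] Lam by simp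
    then show ?thesis using r2 n_def by simp
  qed
qed

end
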